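(* Let $\alpha,\beta\in\mathbb D$ with $\alpha\ne\beta$, $t\in[0,1]$, $\omega\in\mathbb T$, $\gamma:=t\alpha+(1-t)\beta$ and $\varphi(\lambda):=\lambda\,(\omega m_\alpha(\lambda),\,m_\beta(\lambda))$. Then for every $\lambda\in\mathbb D$ with $m_\gamma(\lambda)\neq\lambda$ and $\varphi(\lambda)\ne\varphi(m_\gamma(\lambda))$, $$c\big(\varphi(\lambda),\varphi(m_\gamma(\lambda))\big)=l\big(\varphi(\lambda),\varphi(m_\gamma(\lambda))\big).$$
   Context: $\mathbb D$ is the open unit disc, $\mathbb T$ the unit circle; for $a\in\mathbb D$, $m_a(\lambda)=\frac{a-\lambda}{1-\bar a\lambda}$. For distinct $p,q\in\mathbb D^2$, $c(p,q):=c_{\mathbb D^2}((0,0);p,q)$ and $l(p,q):=l_{\mathbb D^2}((0,0);p,q)$, where for a domain $D$, $z\in D$ and distinct poles $p_1,\dots,p_N\in D$: $l_D(z;p_1,\dots,p_N)$ is the infimum of $\sum_j\log|\lambda_j|$ over holomorphic $\psi:\mathbb D\to D$ and $\lambda_j\in\mathbb D$ with $\psi(0)=z$, $\psi(\lambda_j)=p_j$; and $c_D(z;p_1,\dots,p_N)=\sup\{\log|F(z)|: F:D\to\mathbb D\text{ holomorphic}, F(p_j)=0\ \forall j\}$. *)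

theory Defs
  imports "HOL-Analysis.Analysis"
begin

definition unit_disc :: "complex set" where
  "unit_disc = ball 0 1"

definition bidisc :: "(complex \<times> complex) set" where
  "bidisc = unit_disc \<times> unit_disc"

definition mobius :: "complex \<Rightarrow> complex \<Rightarrow> complex" where
  "mobius a z = (a - z) / (1 - cnj a * z)"

definition elog :: "real \<Rightarrow> ereal" where
  "elog x = (if x = 0 then -\<infinity> else ereal (ln x))"

text \<open>Holomorphy of a function of two complex variables on a set:
  complex Frechet differentiability (derivative is C-linear).\<close>
definition holo2 :: "(complex \<times> complex \<Rightarrow> complex) \<Rightarrow> (complex \<times> complex) set \<Rightarrow> bool" where
  "holo2 F S \<longleftrightarrow> (\<forall>z\<in>S. \<exists>a b. (F has_derivative (\<lambda>(u, v). a * u + b * v)) (at z))"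

definition holo_disc_map :: "(complex \<Rightarrow> complex \<times> complex) \<Rightarrow> (complex \<times> complex) set \<Rightarrow> bool" where
  "holo_disc_map \<psi> D \<longleftrightarrow> (\<lambda>z. fst (\<psi> z)) holomorphic_on unit_disc \<and>
      (\<lambda>z. snd (\<psi> z)) holomorphic_on unit_disc \<and> \<psi> ` unit_disc \<subseteq> D"

definition lempert :: "(complex \<times> complex) set \<Rightarrow> complex \<times> complex \<Rightarrow> (complex \<times> complex) list \<Rightarrow> ereal" where
  "lempert D z ps = Inf {(\<Sum>j<length ps. elog (norm (ls ! j))) | \<psi> ls.
      holo_disc_map \<psi> D \<and> \<psi> 0 = z \<and> length ls = length ps \<and>
      (\<forall>j<length ps. ls ! j \<in> unit_disc \<and> \<psi> (ls ! j) = ps ! j)}"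

definition green_c :: "(complex \<times> complex) set \<Rightarrow> complex \<times> complex \<Rightarrow> (complex \<times> complex) list \<Rightarrow> ereal" where
  "green_c D z ps = Sup {elog (norm (F z)) | F.
      holo2 F D \<and> F ` D \<subseteq> unit_disc \<and> (\<forall>j<length ps. F (ps ! j) = 0)}"

definition c2 :: "complex \<times> complex \<Rightarrow> complex \<times> complex \<Rightarrow> ereal" where
  "c2 p q = green_c bidisc (0, 0) [p, q]"

definition l2 :: "complex \<times> complex \<Rightarrow> complex \<times> complex \<Rightarrow> ereal" where
  "l2 p q = lempert bidisc (0, 0) [p, q]"

end

theory Submission
  imports Defs "HOL-Complex_Analysis.Complex_Analysis"
begin


lemma ud_iff: "z \<in> unit_disc \<longleftrightarrow> norm z < 1"
  by (simp add: unit_disc_def)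

lemma mob_den_nz: "norm a < 1 \<Longrightarrow> norm z < 1 \<Longrightarrow> 1 - cnj a * z \<noteq> 0"
proof
  assume "norm a < 1" "norm z < 1" "1 - cnj a * z = 0"
  then have "cnj a * z = 1" by simp
  then have "norm (cnj a * z) = 1" by simp
  moreover have "norm (cnj a * z) < 1"
    using norm_mult_less[of "cnj a" 1 z 1] \<open>norm a < 1\<close> \<open>norm z < 1\<close> by simp
  ultimately show False by simp
qed

lemma mobius_Moebius: "mobius a z = - Moebius_function 0 a z"
  by (simp add: mobius_def Moebius_function_def field_simps minus_divide_left)

lemma mobius_norm: "norm a < 1 \<Longrightarrow> norm z < 1 \<Longrightarrow> norm (mobius a z) < 1"
  using Moebius_function_norm_lt_1[of a z 0] by (simp add: mobius_Moebius)

lemma mobius_invol: "norm a < 1 \<Longrightarrow> norm z < 1 \<Longrightarrow> mobius a (mobius a z) = z"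
proof -
  assume a: "norm a < 1" and z: "norm z < 1"
  have d: "1 - cnj a * z \<noteq> 0" using mob_den_nz[OF a z] .
  have aa: "cnj a * a \<noteq> 1"
  proof
    assume "cnj a * a = 1"
    then have "norm (cnj a * a) = 1" by simp
    moreover have "norm (cnj a * a) < 1" using norm_mult_less[of "cnj a" 1 a 1] a by simp
    ultimately show False by simp
  qed
  have "1 - cnj a * ((a - z) / (1 - cnj a * z)) = (1 - cnj a * a) / (1 - cnj a * z)"
    using d by (simp add: field_simps)
  moreover have "a - (a - z) / (1 - cnj a * z) = z * (1 - cnj a * a) / (1 - cnj a * z)"
    using d by (simp add: field_simps)
  ultimately show ?thesis using d aa by (simp add: mobius_def)
qed

lemma mobius_holo: "norm a < 1 \<Longrightarrow> mobius a holomorphic_on ball 0 1"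
  unfolding mobius_def
  by (intro holomorphic_intros) (metis mob_den_nz mem_ball_0)

lemma mobius_self: "mobius a a = 0" by (simp add: mobius_def)
lemma mobius_zero: "mobius a 0 = a" by (simp add: mobius_def)

lemma SP1:
  assumes h: "h holomorphic_on ball 0 1" and hD: "\<And>z. norm z < 1 \<Longrightarrow> norm (h z) < 1"
    and a: "norm a < 1" and ha: "h a = 0" and z: "norm z < 1"
  shows "norm (h z) \<le> norm (mobius a z)"
proof -
  define g where "g = h \<circ> mobius a"
  have gh: "g holomorphic_on ball 0 1" unfolding g_def
    by (rule holomorphic_on_compose_gen[OF mobius_holo[OF a] h]) (auto simp: mobius_norm a)
  have "g 0 = 0" by (simp add: g_def mobius_zero ha)
  moreover have "\<And>w. norm w < 1 \<Longrightarrow> norm (g w) < 1" by (simp add: g_def hD mobius_norm a)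
  ultimately have "norm (g (mobius a z)) \<le> norm (mobius a z)"
    using Schwarz_Lemma(1)[OF gh] mobius_norm[OF a z] by blast
  then show ?thesis by (simp add: g_def mobius_invol a z)
qed

lemma mob_pseudo: "norm a < 1 \<Longrightarrow> norm b < 1 \<Longrightarrow> norm (mobius (mobius a b) a) = norm b"
proof -
  assume a: "norm a < 1" and b: "norm b < 1"
  have d: "1 - cnj a * b \<noteq> 0" using mob_den_nz[OF a b] .
  have d': "1 - a * cnj b \<noteq> 0" using d
    by (metis complex_cnj_cnj complex_cnj_mult complex_cnj_one complex_cnj_diff right_minus_eq)
  have aa: "1 - cnj a * a \<noteq> 0" using mob_den_nz[OF a a] .
  have e1: "mobius a b - a = - b * (1 - cnj a * a) / (1 - cnj a * b)"
    using d by (simp add: mobius_def field_simps)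
  have e2: "1 - cnj (mobius a b) * a = (1 - cnj a * a) / (1 - a * cnj b)"
    using d' by (simp add: mobius_def field_simps)
  have "mobius (mobius a b) a = (mobius a b - a) / (1 - cnj (mobius a b) * a)"
    by (rule mobius_def)
  also have "\<dots> = - b * (1 - a * cnj b) / (1 - cnj a * b)"
    unfolding e1 e2 using aa d d' by (simp add: divide_simps)
  finally have "mobius (mobius a b) a = - b * (1 - a * cnj b) / (1 - cnj a * b)" .
  moreover have "norm (1 - a * cnj b) = norm (1 - cnj a * b)"
    by (metis complex_cnj_cnj complex_cnj_mult complex_cnj_one complex_cnj_diff complex_mod_cnj)
  ultimately show ?thesis using d by (simp add: norm_mult norm_divide)
qed

lemma mobius_eq0: "mobius a b = 0 \<longleftrightarrow> a = b \<or> 1 - cnj a * b = 0"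
  by (auto simp: mobius_def)

lemma SP2:
  assumes h: "h holomorphic_on ball 0 1" and hD: "\<And>z. norm z < 1 \<Longrightarrow> norm (h z) < 1"
    and a: "norm a < 1" and b: "norm b < 1" and ab: "a \<noteq> b"
    and ha: "h a = 0" and hb: "h b = 0"
  shows "norm (h 0) \<le> norm a * norm b"
proof -
  define k where "k = h \<circ> mobius a"
  have kh: "k holomorphic_on ball 0 1" unfolding k_def
    by (rule holomorphic_on_compose_gen[OF mobius_holo[OF a] h]) (auto simp: mobius_norm a)
  have k0: "k 0 = 0" by (simp add: k_def mobius_zero ha)
  have kD: "\<And>w. norm w < 1 \<Longrightarrow> norm (k w) < 1" by (simp add: k_def hD mobius_norm a)
  obtain k1 where k1h: "k1 holomorphic_on ball 0 1" and kk1: "\<And>z. norm z < 1 \<Longrightarrow> k z = z * k1 z"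
      and dk: "deriv k 0 = k1 0"
    using Schwarz3[OF kh k0] by blast
  define c where "c = mobius a b"
  have c1: "norm c < 1" using mobius_norm[OF a b] by (simp add: c_def)
  have cnz: "c \<noteq> 0" using ab mob_den_nz[OF a b] by (simp add: c_def mobius_eq0)
  have kc: "k c = 0" by (simp add: k_def c_def mobius_invol a b hb)
  have k1D: "norm (k1 z) < 1" if z: "norm z < 1" for z
  proof (rule ccontr)
    assume nl: "\<not> norm (k1 z) < 1"
    have sch: "(\<exists>w. norm w < 1 \<and> w \<noteq> 0 \<and> norm (k w) = norm w) \<or> norm (deriv k 0) = 1"
    proof (cases "z = 0")
      case True
      then show ?thesis using Schwarz_Lemma(2)[OF kh k0 kD z] nl dk by auto
    next
      case False
      have "norm (k z) \<le> norm z" using Schwarz_Lemma(1)[OF kh k0 kD z] .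
      moreover have "norm (k z) = norm z * norm (k1 z)" using kk1[OF z] by (simp add: norm_mult)
      ultimately have "norm (k1 z) \<le> 1" using False
        by (metis mult.right_neutral mult_le_cancel_left_pos norm_ge_zero order_le_less zero_less_norm_iff)
      then have "norm (k z) = norm z" using nl \<open>norm (k z) = norm z * norm (k1 z)\<close> by simp
      then show ?thesis using z False by blast
    qed
    obtain \<alpha> where "\<forall>w. norm w < 1 \<longrightarrow> k w = \<alpha> * w" "norm \<alpha> = 1"
      using Schwarz_Lemma(3)[OF kh k0 kD z sch] by blast
    then have "k c = \<alpha> * c" using c1 by blast
    then show False using kc cnz \<open>norm \<alpha> = 1\<close> by auto
  qed
  have k1c: "k1 c = 0" using kk1[OF c1] kc cnz by simp
  have "norm (k1 a) \<le> norm (mobius c a)" by (rule SP1[OF k1h k1D c1 k1c a])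
  also have "\<dots> = norm b" unfolding c_def by (rule mob_pseudo[OF a b])
  finally have k1a: "norm (k1 a) \<le> norm b" .
  have "h 0 = k a" by (simp add: k_def mobius_self)
  also have "\<dots> = a * k1 a" using kk1[OF a] .
  finally show ?thesis using k1a by (simp add: norm_mult mult_left_mono)
qed



definition H2 :: "(complex \<times> complex \<Rightarrow> complex) \<Rightarrow> complex \<times> complex \<Rightarrow> bool" where
  "H2 F x \<longleftrightarrow> (\<exists>a b. (F has_derivative (\<lambda>(u, v). a * u + b * v)) (at x))"

lemma H2_const: "H2 (\<lambda>_. c) x"
proof -
  have "(\<lambda>(u::complex, v::complex). 0 * u + 0 * v) = (\<lambda>_. 0::complex)" by auto
  then show ?thesis unfolding H2_def using has_derivative_const by metis
qed

lemma H2_fst: "H2 fst x"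
proof -
  have "(fst has_derivative fst) (at x)" using has_derivative_fst[OF has_derivative_ident] by fast
  moreover have "(\<lambda>(u::complex, v::complex). 1 * u + 0 * v) = fst" by auto
  ultimately show ?thesis unfolding H2_def by metis
qed

lemma H2_snd: "H2 snd x"
proof -
  have "(snd has_derivative snd) (at x)" using has_derivative_snd[OF has_derivative_ident] by fast
  moreover have "(\<lambda>(u::complex, v::complex). 0 * u + 1 * v) = snd" by auto
  ultimately show ?thesis unfolding H2_def by metis
qed

lemma H2_add: "H2 f x \<Longrightarrow> H2 g x \<Longrightarrow> H2 (\<lambda>y. f y + g y) x"
  unfolding H2_def
proof (elim exE)
  fix a1 b1 a2 b2
  assume f: "(f has_derivative (\<lambda>(u, v). a1 * u + b1 * v)) (at x)"
    and g: "(g has_derivative (\<lambda>(u, v). a2 * u + b2 * v)) (at x)"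
  have "((\<lambda>y. f y + g y) has_derivative (\<lambda>h. (\<lambda>(u, v). a1 * u + b1 * v) h + (\<lambda>(u, v). a2 * u + b2 * v) h)) (at x)"
    by (rule has_derivative_add[OF f g])
  moreover have "(\<lambda>h. (\<lambda>(u, v). a1 * u + b1 * v) h + (\<lambda>(u, v). a2 * u + b2 * v) h) = (\<lambda>(u, v). (a1+a2) * u + (b1+b2) * v)"
    by (auto simp: fun_eq_iff algebra_simps)
  ultimately show "\<exists>a b. ((\<lambda>y. f y + g y) has_derivative (\<lambda>(u, v). a * u + b * v)) (at x)" by metis
qed

lemma H2_mult: "H2 f x \<Longrightarrow> H2 g x \<Longrightarrow> H2 (\<lambda>y. f y * g y) x"
  unfolding H2_def
proof (elim exE)
  fix a1 b1 a2 b2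
  assume f: "(f has_derivative (\<lambda>(u, v). a1 * u + b1 * v)) (at x)"
    and g: "(g has_derivative (\<lambda>(u, v). a2 * u + b2 * v)) (at x)"
  have "((\<lambda>y. f y * g y) has_derivative (\<lambda>h. f x * (\<lambda>(u, v). a2 * u + b2 * v) h + (\<lambda>(u, v). a1 * u + b1 * v) h * g x)) (at x)"
    by (rule has_derivative_mult[OF f g])
  moreover have "(\<lambda>h. f x * (\<lambda>(u, v). a2 * u + b2 * v) h + (\<lambda>(u, v). a1 * u + b1 * v) h * g x) = (\<lambda>(u, v). (f x * a2 + a1 * g x) * u + (f x * b2 + b1 * g x) * v)"
    by (auto simp: fun_eq_iff algebra_simps)
  ultimately show "\<exists>a b. ((\<lambda>y. f y * g y) has_derivative (\<lambda>(u, v). a * u + b * v)) (at x)" by metis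
qed

lemma H2_divide: "H2 f x \<Longrightarrow> H2 g x \<Longrightarrow> g x \<noteq> 0 \<Longrightarrow> H2 (\<lambda>y. f y / g y) x"
  unfolding H2_def
proof (elim exE)
  fix a1 b1 a2 b2
  assume f: "(f has_derivative (\<lambda>(u, v). a1 * u + b1 * v)) (at x)"
    and g: "(g has_derivative (\<lambda>(u, v). a2 * u + b2 * v)) (at x)" and nz: "g x \<noteq> 0"
  have "((\<lambda>y. f y / g y) has_derivative (\<lambda>h. ((\<lambda>(u, v). a1 * u + b1 * v) h * g x - f x * (\<lambda>(u, v). a2 * u + b2 * v) h) / (g x * g x))) (at x)"
    by (rule has_derivative_divide'[OF f g nz])
  moreover have "(\<lambda>h. ((\<lambda>(u, v). a1 * u + b1 * v) h * g x - f x * (\<lambda>(u, v). a2 * u + b2 * v) h) / (g x * g x))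
     = (\<lambda>(u, v). ((a1 * g x - f x * a2) / (g x * g x)) * u + ((b1 * g x - f x * b2) / (g x * g x)) * v)"
    using nz by (auto simp: fun_eq_iff field_simps)
  ultimately show "\<exists>a b. ((\<lambda>y. f y / g y) has_derivative (\<lambda>(u, v). a * u + b * v)) (at x)" by metis
qed

lemma H2_comp: "H2 f x \<Longrightarrow> (g has_field_derivative d) (at (f x)) \<Longrightarrow> H2 (\<lambda>y. g (f y)) x"
  unfolding H2_def
proof (elim exE)
  fix a1 b1
  assume f: "(f has_derivative (\<lambda>(u, v). a1 * u + b1 * v)) (at x)"
    and g: "(g has_field_derivative d) (at (f x))"
  have g': "(g has_derivative (\<lambda>h. d * h)) (at (f x))" using g by (simp add: has_field_derivative_def mult_commute_abs)
  have "((\<lambda>y. g (f y)) has_derivative (\<lambda>h. d * (\<lambda>(u, v). a1 * u + b1 * v) h)) (at x)"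
    using has_derivative_compose[OF f g'] by simp
  moreover have "(\<lambda>h. d * (\<lambda>(u, v). a1 * u + b1 * v) h) = (\<lambda>(u, v). (d * a1) * u + (d * b1) * v)"
    by (auto simp: fun_eq_iff algebra_simps)
  ultimately show "\<exists>a b. ((\<lambda>y. g (f y)) has_derivative (\<lambda>(u, v). a * u + b * v)) (at x)" by metis
qed

lemma holo2_H2: "(\<And>x. x \<in> S \<Longrightarrow> H2 F x) \<Longrightarrow> holo2 F S"
  by (simp add: holo2_def H2_def)

lemma holo2_comp_disc:
  assumes F: "holo2 F bidisc" and psi: "holo_disc_map \<psi> bidisc"
  shows "(\<lambda>z. F (\<psi> z)) holomorphic_on ball 0 1"
proof -
  have f1: "(\<lambda>z. fst (\<psi> z)) holomorphic_on ball 0 1" and f2: "(\<lambda>z. snd (\<psi> z)) holomorphic_on ball 0 1"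
    and im: "\<psi> ` ball 0 1 \<subseteq> bidisc"
    using psi by (auto simp: holo_disc_map_def unit_disc_def)
  show ?thesis unfolding holomorphic_on_def
  proof
    fix z :: complex assume z: "z \<in> ball 0 1"
    have o: "open (ball (0::complex) 1)" by simp
    obtain d1 where d1: "((\<lambda>z. fst (\<psi> z)) has_field_derivative d1) (at z)"
      using f1 z o by (meson holomorphic_on_imp_differentiable_at field_differentiable_def)
    obtain d2 where d2: "((\<lambda>z. snd (\<psi> z)) has_field_derivative d2) (at z)"
      using f2 z o by (meson holomorphic_on_imp_differentiable_at field_differentiable_def)
    have "\<psi> z \<in> bidisc" using im z by blast
    then obtain a b where Fd: "(F has_derivative (\<lambda>(u, v). a * u + b * v)) (at (\<psi> z))"
      using F by (auto simp: holo2_def)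
    have pd: "((\<lambda>z. (fst (\<psi> z), snd (\<psi> z))) has_derivative (\<lambda>h. (d1 * h, d2 * h))) (at z)"
      using has_derivative_Pair[OF d1[unfolded has_field_derivative_def] d2[unfolded has_field_derivative_def]]
      by (simp add: mult.commute)
    have pe: "(\<lambda>z. (fst (\<psi> z), snd (\<psi> z))) = \<psi>" by simp
    have "((\<lambda>z. F (\<psi> z)) has_derivative (\<lambda>h. (\<lambda>(u, v). a * u + b * v) (d1 * h, d2 * h))) (at z)"
      using has_derivative_compose[OF pd[unfolded pe] Fd] by simp
    moreover have "(\<lambda>h. (\<lambda>(u, v). a * u + b * v) (d1 * h, d2 * h)) = (\<lambda>h. h * (a * d1 + b * d2))"
      by (auto simp: fun_eq_iff algebra_simps)
    ultimately have "((\<lambda>z. F (\<psi> z)) has_field_derivative (a * d1 + b * d2)) (at z)"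
      by (simp add: has_field_derivative_def mult_commute_abs)
    then show "(\<lambda>z. F (\<psi> z)) field_differentiable at z within ball 0 1"
      using field_differentiable_at_within field_differentiable_def by blast
  qed
qed

lemma elog_mono: "0 \<le> x \<Longrightarrow> x \<le> y \<Longrightarrow> elog x \<le> elog y"
  by (auto simp: elog_def)

lemma elog_mult: "0 \<le> x \<Longrightarrow> 0 \<le> y \<Longrightarrow> elog (x * y) = elog x + elog y"
  by (auto simp: elog_def ln_mult)



lemma G_ident:
  fixes z w \<eta> :: complex and t :: real
  assumes e: "\<eta> * cnj \<eta> = 1"
  shows "cmod (1 + \<eta> * (of_real (1-t) * z + of_real t * w))^2 - cmod (of_real t * z + of_real (1-t) * w + \<eta> * z * w)^2
     = (1-t) * (1 - cmod w^2) * cmod (1 + \<eta> * z)^2 + t * (1 - cmod z^2) * cmod (1 + \<eta> * w)^2"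
proof -
  have "complex_of_real (cmod (1 + \<eta> * (of_real (1-t) * z + of_real t * w))^2 - cmod (of_real t * z + of_real (1-t) * w + \<eta> * z * w)^2)
     = complex_of_real ((1-t) * (1 - cmod w^2) * cmod (1 + \<eta> * z)^2 + t * (1 - cmod z^2) * cmod (1 + \<eta> * w)^2)"
    unfolding of_real_diff of_real_add of_real_mult complex_norm_square of_real_1
    apply (simp only: complex_cnj_add complex_cnj_mult complex_cnj_diff complex_cnj_complex_of_real complex_cnj_one)
    apply (rule eq_iff_diff_eq_0[THEN iffD2])
    apply (rule trans[of _ "(\<eta> * cnj \<eta> - 1) * (((1 - of_real t) * z + of_real t * w) * ((1 - of_real t) * cnj z + of_real t * cnj w) - z * cnj z * (w * cnj w) - (1 - of_real t) * (1 - w * cnj w) * (z * cnj z) - of_real t * (1 - z * cnj z) * (w * cnj w))"])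
     apply algebra
    by (simp add: e)
  then show ?thesis using of_real_eq_iff by blast
qed

lemma G_lt:
  fixes z w \<eta> :: complex and t :: real
  assumes e: "norm \<eta> = 1" and t: "0 \<le> t" "t \<le> 1" and z: "norm z < 1" and w: "norm w < 1"
  shows "cmod (of_real t * z + of_real (1-t) * w + \<eta> * z * w) < cmod (1 + \<eta> * (of_real (1-t) * z + of_real t * w))"
proof -
  have ee: "\<eta> * cnj \<eta> = 1" using e
    by (metis complex_norm_square mult.commute of_real_1 power_one)
  have nz1: "1 + \<eta> * z \<noteq> 0"
  proof
    assume "1 + \<eta> * z = 0"
    then have "norm (\<eta> * z) = 1" by (metis add_eq_0_iff norm_minus_cancel norm_one)
    then show False using e z by (simp add: norm_mult)
  qed
  have nz2: "1 + \<eta> * w \<noteq> 0"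
  proof
    assume "1 + \<eta> * w = 0"
    then have "norm (\<eta> * w) = 1" by (metis add_eq_0_iff norm_minus_cancel norm_one)
    then show False using e w by (simp add: norm_mult)
  qed
  have P: "(1 - cmod w^2) * cmod (1 + \<eta> * z)^2 > 0"
    using nz1 w by (simp add: power_less_one_iff abs_square_less_1)
  have Q: "(1 - cmod z^2) * cmod (1 + \<eta> * w)^2 > 0"
    using nz2 z by (simp add: abs_square_less_1)
  have "(1-t) * ((1 - cmod w^2) * cmod (1 + \<eta> * z)^2) + t * ((1 - cmod z^2) * cmod (1 + \<eta> * w)^2) > 0"
  proof (cases "t = 0")
    case True then show ?thesis using P by simp
  next
    case False
    then have "t * ((1 - cmod z^2) * cmod (1 + \<eta> * w)^2) > 0" using Q t by simp
    moreover have "(1-t) * ((1 - cmod w^2) * cmod (1 + \<eta> * z)^2) \<ge> 0" using P t by simp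
    ultimately show ?thesis by linarith
  qed
  then have "cmod (1 + \<eta> * (of_real (1-t) * z + of_real t * w))^2 - cmod (of_real t * z + of_real (1-t) * w + \<eta> * z * w)^2 > 0"
    using G_ident[OF ee, of t z w] by (simp add: algebra_simps)
  then show ?thesis
    by (metis diff_gt_0_iff_gt norm_ge_zero power_less_imp_less_base)
qed

lemma conv_norm:
  fixes a b :: complex and t :: real
  assumes "norm a < 1" "norm b < 1" "0 \<le> t" "t \<le> 1"
  shows "norm (of_real t * a + of_real (1-t) * b) < 1"
proof -
  have "norm (of_real t * a + of_real (1-t) * b) \<le> t * norm a + (1-t) * norm b"
    using assms norm_triangle_ineq[of "of_real t * a" "of_real (1-t) * b"]
    by (simp add: norm_mult del: of_real_diff)
  also have "\<dots> < 1"
  proof (cases "t = 0")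
    case True then show ?thesis using assms by simp
  next
    case False
    then have "t * norm a < t" using assms by simp
    moreover have "(1-t) * norm b \<le> 1 - t" using assms by (simp add: mult_left_le)
    ultimately show ?thesis by linarith
  qed
  finally show ?thesis .
qed

lemma G_phi_eq:
  fixes \<alpha> \<beta> l :: complex and t :: real
  assumes a: "norm \<alpha> < 1" and b: "norm \<beta> < 1" and ab: "\<alpha> \<noteq> \<beta>" and l: "norm l < 1"
    and den: "1 + \<eta> * (of_real (1-t) * z + of_real t * w) \<noteq> 0"
    and g: "norm (of_real t * \<alpha> + of_real (1-t) * \<beta>) < 1"
    and eta: "\<eta> = cnj (\<alpha> - \<beta>) / (\<alpha> - \<beta>)"
    and zd: "z = l * mobius \<alpha> l" and wd: "w = l * mobius \<beta> l"
  shows "(of_real t * z + of_real (1-t) * w + \<eta> * z * w) / (1 + \<eta> * (of_real (1-t) * z + of_real t * w))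
     = l * mobius (of_real t * \<alpha> + of_real (1-t) * \<beta>) l"
proof -
  have da: "1 - cnj \<alpha> * l \<noteq> 0" using mob_den_nz[OF a l] .
  have db: "1 - cnj \<beta> * l \<noteq> 0" using mob_den_nz[OF b l] .
  have dg: "1 - (of_real t * cnj \<alpha> + of_real (1-t) * cnj \<beta>) * l \<noteq> 0"
    using mob_den_nz[OF g l] by simp
  have dd: "\<alpha> - \<beta> \<noteq> 0" using ab by simp
  define A where "A = 1 - cnj \<alpha> * l"
  define B where "B = 1 - cnj \<beta> * l"
  define C where "C = 1 - (of_real t * cnj \<alpha> + of_real (1-t) * cnj \<beta>) * l"
  define \<delta> where "\<delta> = \<alpha> - \<beta>"
  define E where "E = cnj \<alpha> - cnj \<beta>"
  define Z where "Z = l * (\<alpha> - l)"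
  define W where "W = l * (\<beta> - l)"
  define M where "M = (of_real t * \<alpha> + of_real (1-t) * \<beta>) - l"
  have zz: "z = Z / A" unfolding zd Z_def A_def mobius_def by simp
  have ww: "w = W / B" unfolding wd W_def B_def mobius_def by simp
  have ee: "\<eta> = E / \<delta>" unfolding eta E_def \<delta>_def by simp
  have mm: "mobius (of_real t * \<alpha> + of_real (1-t) * \<beta>) l = M / C"
    unfolding mobius_def M_def C_def by simp
  have A0: "A \<noteq> 0" and B0: "B \<noteq> 0" and C0: "C \<noteq> 0" and d0: "\<delta> \<noteq> 0"
    using da db dg dd by (auto simp: A_def B_def C_def \<delta>_def)
  have n: "(of_real t * z + of_real (1-t) * w + \<eta> * z * w) * (A * B * \<delta>)
      = \<delta> * (of_real t * Z * B + of_real (1-t) * W * A) + E * Z * W"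
    unfolding zz ww ee using A0 B0 d0 by (simp add: field_simps)
  have d: "(1 + \<eta> * (of_real (1-t) * z + of_real t * w)) * (A * B * \<delta>)
      = \<delta> * A * B + E * (of_real (1-t) * Z * B + of_real t * W * A)"
    unfolding zz ww ee using A0 B0 d0 by (simp add: field_simps)
  have key: "(\<delta> * (of_real t * Z * B + of_real (1-t) * W * A) + E * Z * W) * C
      = l * M * (\<delta> * A * B + E * (of_real (1-t) * Z * B + of_real t * W * A))"
    unfolding A_def B_def C_def \<delta>_def E_def Z_def W_def M_def of_real_diff of_real_1
    by algebra
  define nu where "nu = of_real t * z + of_real (1-t) * w + \<eta> * z * w"
  define de where "de = 1 + \<eta> * (of_real (1-t) * z + of_real t * w)"
  have L: "nu * C * (A * B * \<delta>) = (\<delta> * (of_real t * Z * B + of_real (1-t) * W * A) + E * Z * W) * C"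
    unfolding n[symmetric] nu_def by (simp only: mult_ac)
  have R: "l * M * de * (A * B * \<delta>) = l * M * (\<delta> * A * B + E * (of_real (1-t) * Z * B + of_real t * W * A))"
    unfolding d[symmetric] de_def by (simp only: mult_ac)
  have "nu * C * (A * B * \<delta>) = l * M * de * (A * B * \<delta>)" unfolding L R by (rule key)
  then have "nu * C = l * M * de" using A0 B0 d0 by simp
  then have "(of_real t * z + of_real (1-t) * w + \<eta> * z * w) * C
     = l * M * (1 + \<eta> * (of_real (1-t) * z + of_real t * w))" unfolding nu_def de_def .
  then show ?thesis using den C0 unfolding mm by (simp add: field_simps)
qed



lemma c2_le_l2:
  assumes pq: "p \<noteq> q"
  shows "c2 p q \<le> l2 p q"
  unfolding c2_def l2_def green_c_def lempert_def
proof (rule Sup_least, rule Inf_greatest, elim CollectE exE conjE)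
  fix x y F \<psi> ls
  assume x: "x = elog (cmod (F (0, 0)))" and F: "holo2 F bidisc" and FD: "F ` bidisc \<subseteq> unit_disc"
    and F0: "\<forall>j<length [p, q]. F ([p, q] ! j) = 0"
    and y: "y = (\<Sum>j<length [p, q]. elog (cmod (ls ! j)))" and psi: "holo_disc_map \<psi> bidisc"
    and psi0: "\<psi> 0 = (0, 0)" and len: "length ls = length [p, q]"
    and lsp: "\<forall>j<length [p, q]. ls ! j \<in> unit_disc \<and> \<psi> (ls ! j) = [p, q] ! j"
  have l0: "norm (ls!0) < 1" "\<psi> (ls!0) = p" using lsp[rule_format, of 0] by (auto simp: unit_disc_def)
  have l1: "norm (ls!1) < 1" "\<psi> (ls!1) = q" using lsp[rule_format, of 1] by (auto simp: unit_disc_def)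
  have Fp: "F p = 0" and Fq: "F q = 0" using F0[rule_format, of 0] F0[rule_format, of 1] by auto
  have hh: "(\<lambda>z. F (\<psi> z)) holomorphic_on ball 0 1" by (rule holo2_comp_disc[OF F psi])
  have hD: "norm (F (\<psi> z)) < 1" if "norm z < 1" for z
  proof -
    have "\<psi> z \<in> bidisc" using psi that by (auto simp: holo_disc_map_def unit_disc_def)
    then show ?thesis using FD by (auto simp: unit_disc_def)
  qed
  have ne: "ls!0 \<noteq> ls!1" using l0 l1 pq by auto
  have "norm (F (\<psi> 0)) \<le> norm (ls!0) * norm (ls!1)"
    by (rule SP2[OF hh hD l0(1) l1(1) ne]) (simp, metis l0(2) Fp, metis l1(2) Fq)
  then have "elog (cmod (F (0, 0))) \<le> elog (norm (ls!0) * norm (ls!1))"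
    using psi0 by (simp add: elog_mono)
  also have "\<dots> = elog (norm (ls!0)) + elog (norm (ls!1))" by (simp add: elog_mult)
  also have "\<dots> = y" unfolding y by (simp add: numeral_2_eq_2 lessThan_Suc add.commute)
  finally show "x \<le> y" using x by simp
qed

theorem corollary4:
  fixes \<alpha> \<beta> \<omega> lam :: complex and t :: real
  assumes "\<alpha> \<in> unit_disc" and "\<beta> \<in> unit_disc" and "\<alpha> \<noteq> \<beta>"
    and "0 \<le> t" and "t \<le> 1" and "norm \<omega> = 1"
    and "lam \<in> unit_disc"
  defines "\<gamma> \<equiv> of_real t * \<alpha> + of_real (1 - t) * \<beta>"
  defines "\<phi> \<equiv> (\<lambda>z. (z * (\<omega> * mobius \<alpha> z), z * mobius \<beta> z))"
  assumes "mobius \<gamma> lam \<noteq> lam" and "\<phi> lam \<noteq> \<phi> (mobius \<gamma> lam)"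
  shows "c2 (\<phi> lam) (\<phi> (mobius \<gamma> lam)) = l2 (\<phi> lam) (\<phi> (mobius \<gamma> lam))"
proof -
  have a: "norm \<alpha> < 1" and b: "norm \<beta> < 1" and l: "norm lam < 1"
    using assms(1,2,7) by (auto simp: unit_disc_def)
  have ab: "\<alpha> \<noteq> \<beta>" and t0: "0 \<le> t" and t1: "t \<le> 1" and om: "norm \<omega> = 1"
    using assms by auto
  have g: "norm \<gamma> < 1" unfolding \<gamma>_def by (rule conv_norm[OF a b t0 t1])
  define \<mu> where "\<mu> = mobius \<gamma> lam"
  have mu: "norm \<mu> < 1" unfolding \<mu>_def by (rule mobius_norm[OF g l])
  have mul: "mobius \<gamma> \<mu> = lam" unfolding \<mu>_def by (rule mobius_invol[OF g l])
  define p where "p = \<phi> lam"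
  define q where "q = \<phi> \<mu>"
  have pq: "p \<noteq> q" using assms(11) by (simp add: p_def q_def \<mu>_def)
  have oo: "cnj \<omega> * \<omega> = 1" using om
    by (metis complex_norm_square mult.commute of_real_1 power_one)
  have phiD: "\<phi> z \<in> bidisc" if z: "norm z < 1" for z
  proof -
    have "norm (z * (\<omega> * mobius \<alpha> z)) < 1"
      using norm_mult_less[OF z mobius_norm[OF a z]] om by (simp add: norm_mult)
    moreover have "norm (z * mobius \<beta> z) < 1"
      using norm_mult_less[OF z mobius_norm[OF b z]] by simp
    ultimately show ?thesis by (simp add: \<phi>_def bidisc_def unit_disc_def)
  qed
  have hdm: "holo_disc_map \<phi> bidisc"
    unfolding holo_disc_map_def
  proof (intro conjI)
    show "(\<lambda>z. fst (\<phi> z)) holomorphic_on unit_disc"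
      unfolding \<phi>_def unit_disc_def mobius_def fst_conv snd_conv
      by (intro holomorphic_intros) (metis mob_den_nz a mem_ball_0)
    show "(\<lambda>z. snd (\<phi> z)) holomorphic_on unit_disc"
      unfolding \<phi>_def unit_disc_def mobius_def fst_conv snd_conv
      by (intro holomorphic_intros) (metis mob_den_nz b mem_ball_0)
    show "\<phi> ` unit_disc \<subseteq> bidisc" using phiD by (auto simp: unit_disc_def)
  qed
  define X where "X = elog (norm lam) + elog (norm \<mu>)"
  have lX: "l2 p q \<le> X"
    unfolding l2_def lempert_def
  proof (rule Inf_lower, rule CollectI, intro exI conjI)
    show "X = (\<Sum>j<length [p, q]. elog (cmod ([lam, \<mu>] ! j)))"
      unfolding X_def by (simp add: numeral_2_eq_2 lessThan_Suc add.commute)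
    show "holo_disc_map \<phi> bidisc" by (rule hdm)
    show "\<phi> 0 = (0, 0)" by (simp add: \<phi>_def)
    show "length [lam, \<mu>] = length [p, q]" by simp
    show "\<forall>j<length [p, q]. [lam, \<mu>] ! j \<in> unit_disc \<and> \<phi> ([lam, \<mu>] ! j) = [p, q] ! j"
      using l mu by (auto simp: unit_disc_def p_def q_def less_Suc_eq nth_Cons')
  qed
  define \<eta> where "\<eta> = cnj (\<alpha> - \<beta>) / (\<alpha> - \<beta>)"
  have eta: "norm \<eta> = 1" using ab by (simp add: \<eta>_def norm_divide del: complex_cnj_diff)
  define G where "G = (\<lambda>y::complex\<times>complex. (of_real t * (cnj \<omega> * fst y) + of_real (1-t) * snd y + \<eta> * (cnj \<omega> * fst y) * snd y)
      / (1 + \<eta> * (of_real (1-t) * (cnj \<omega> * fst y) + of_real t * snd y)))"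
  define c where "c = lam * \<mu>"
  have c1: "norm c < 1" unfolding c_def using norm_mult_less[OF l mu] by simp
  define F where "F = (\<lambda>y. mobius c (G y))"
  have GD: "norm (G y) < 1 \<and> 1 + \<eta> * (of_real (1-t) * (cnj \<omega> * fst y) + of_real t * snd y) \<noteq> 0"
    if y: "y \<in> bidisc" for y
  proof -
    have z: "norm (cnj \<omega> * fst y) < 1" using y om by (auto simp: bidisc_def unit_disc_def norm_mult)
    have w: "norm (snd y) < 1" using y by (auto simp: bidisc_def unit_disc_def)
    have lt: "cmod (of_real t * (cnj \<omega> * fst y) + of_real (1-t) * snd y + \<eta> * (cnj \<omega> * fst y) * snd y)
       < cmod (1 + \<eta> * (of_real (1-t) * (cnj \<omega> * fst y) + of_real t * snd y))"
      by (rule G_lt[OF eta t0 t1 z w])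
    then have "1 + \<eta> * (of_real (1-t) * (cnj \<omega> * fst y) + of_real t * snd y) \<noteq> 0" by auto
    then show ?thesis using lt by (simp add: G_def norm_divide divide_less_eq_1)
  qed
  have Gphi: "G (\<phi> z) = z * mobius \<gamma> z" if z: "norm z < 1" for z
  proof -
    have e1: "cnj \<omega> * fst (\<phi> z) = z * mobius \<alpha> z"
      unfolding \<phi>_def using oo by (simp add: algebra_simps)
    have e2: "snd (\<phi> z) = z * mobius \<beta> z" unfolding \<phi>_def by simp
    have den: "1 + \<eta> * (of_real (1-t) * (z * mobius \<alpha> z) + of_real t * (z * mobius \<beta> z)) \<noteq> 0"
      using GD[OF phiD[OF z]] e1 e2 by simp
    show ?thesis unfolding G_def e1 e2 \<gamma>_def
      by (rule G_phi_eq[OF a b ab z den _ \<eta>_def refl refl]) (use g in \<open>simp add: \<gamma>_def\<close>)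
  qed
  have cX: "X \<le> c2 p q"
    unfolding c2_def green_c_def
  proof (rule Sup_upper, rule CollectI, intro exI conjI)
    show "holo2 F bidisc"
    proof (rule holo2_H2)
      fix y assume y: "y \<in> bidisc"
      have HG: "H2 G y" unfolding G_def
        by (intro H2_divide H2_add H2_mult H2_const H2_fst H2_snd) (use GD[OF y] in simp)
      have "mobius c field_differentiable at (G y)"
        using holomorphic_on_imp_differentiable_at[OF mobius_holo[OF c1], of "G y"] GD[OF y] by simp
      then obtain d where "(mobius c has_field_derivative d) (at (G y))"
        using field_differentiable_def by blast
      then show "H2 F y" unfolding F_def by (rule H2_comp[OF HG])
    qed
    show "F ` bidisc \<subseteq> unit_disc" using GD mobius_norm[OF c1] by (auto simp: F_def unit_disc_def)
    show "\<forall>j<length [p, q]. F ([p, q] ! j) = 0"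
    proof -
      have "F p = 0" unfolding F_def p_def using Gphi[OF l] by (simp add: c_def \<mu>_def mobius_self)
      moreover have "F q = 0" unfolding F_def q_def using Gphi[OF mu] mul
        by (simp add: c_def mobius_self mult.commute)
      ultimately show ?thesis by (auto simp: less_Suc_eq)
    qed
    have "G (0, 0) = 0" by (simp add: G_def)
    then have "F (0, 0) = c" by (simp add: F_def mobius_zero)
    then show "X = elog (cmod (F (0, 0)))" by (simp add: X_def c_def norm_mult elog_mult)
  qed
  have "c2 p q \<le> l2 p q" by (rule c2_le_l2[OF pq])
  then have "c2 p q = l2 p q" using lX cX by (meson order.trans antisym)
  then show ?thesis by (simp add: p_def q_def \<mu>_def)
qed


end
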